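(* Assume that $\Omega$ is a slice domain or a product domain. If $f$ and $g$ are slice regular and tame on $\Omega$, and $N(f)$ and $N(g)$ do not vanish identically, then $N(f\cdot g)=N(f)N(g)=N(g)N(f)$ on $\Omega$. As a consequence, $f\cdot g$ is a tame slice regular function on $\Omega$.
   Context: Let $A$ be a finite-dimensional real algebra with unit $1$ ($\mathbb{R}$ identified with $\mathbb{R}1$) which is alternative (the associator $(x,y,z)=(xy)z-x(yz)$ is alternating), with a $^*$-involution $x\mapsto x^c$ (real linear, $(x^c)^c=x$, $(xy)^c=y^cx^c$, $r^c=r$ for $r\in\mathbb{R}$). Let $t(x)=x+x^c$, $n(x)=xx^c$, $\mathbb{S}_A=\{J\in A:t(J)=0,n(J)=1\}$ (assumed non-empty), $Q_A=\mathbb{R}\cup\{x\in A:t(x),n(x)\in\mathbb{R},\ 4n(x)>t(x)^2\}$; every $x\in Q_A$ is $\alpha+\beta J$ with $\alpha,\beta\in\mathbb{R}$, $J\in\mathbb{S}_A$. Let $D\subseteq\mathbb{C}$ be non-empty and invariant under complex conjugation and $\Omega=\{\alpha+\beta J:\alpha+i\beta\in D,\ J\in\mathbb{S}_A\}$. Let $A_{\mathbb{C}}=\{a+\imath b:a,b\in A\}$ with product $(a+\imath b)(a'+\imath b')=aa'-bb'+\imath(ab'+ba')$, conjugation $\overline{a+\imath b}=a-\imath b$, involution $(a+\imath b)^c=a^c+\imath b^c$. A stem function is $F=F_1+\imath F_2:D\to A_{\mathbb{C}}$ with $F(\bar z)=\overline{F(z)}$; it induces the slice function $f=\mathcal{I}(F)$,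 $f(\alpha+\beta J)=F_1(\alpha+i\beta)+JF_2(\alpha+i\beta)$. Slice product $f\cdot g=\mathcal{I}(FG)$, conjugate $f^c=\mathcal{I}(F^c)$, $F^c(z)=F(z)^c$, normal function $N(f)=f\cdot f^c$. $f$ is slice preserving if $F_1,F_2$ are real valued; $f$ is tame if $N(f)$ is slice preserving and $N(f)=N(f^c)$. When $D$ is open, $f$ is slice regular if $F$ is $\mathscr{C}^1$ and $\frac12\big(\frac{\partial F}{\partial\alpha}+\imath\frac{\partial F}{\partial\beta}\big)\equiv0$ ($z=\alpha+i\beta$). $\Omega$ is a slice domain if $D$ is open, connected and meets $\mathbb{R}$; a product domain if $D$ is open, $D\cap\mathbb{R}=\emptyset$ and $D$ has two connected components exchanged by complex conjugation. *)

theory Defs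
  imports "HOL-Analysis.Analysis"
begin

text \<open>The algebra A is modelled as a finite-dimensional real vector space
 (type class euclidean_space; any finite-dimensional real vector space carries
 such a structure) with an explicit bilinear product mul, unit one and
 involution cj.  The reals are embedded as r |-> r *R one.\<close>

definition assoc3 :: "('a::real_vector \<Rightarrow> 'a \<Rightarrow> 'a) \<Rightarrow> 'a \<Rightarrow> 'a \<Rightarrow> 'a \<Rightarrow> 'a" where
  "assoc3 mul x y z = mul (mul x y) z - mul x (mul y z)"

definition alt_star_algebra ::
  "('a::euclidean_space \<Rightarrow> 'a \<Rightarrow> 'a) \<Rightarrow> 'a \<Rightarrow> ('a \<Rightarrow> 'a) \<Rightarrow> bool" where
  "alt_star_algebra mul one cj \<longleftrightarrow>
     bilinear mul \<and> one \<noteq> 0 \<and>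
     (\<forall>x. mul one x = x \<and> mul x one = x) \<and>
     (\<forall>x y. assoc3 mul x x y = 0 \<and> assoc3 mul x y x = 0 \<and> assoc3 mul y x x = 0) \<and>
     linear cj \<and> (\<forall>x. cj (cj x) = x) \<and>
     (\<forall>x y. cj (mul x y) = mul (cj y) (cj x)) \<and>
     (\<forall>r. cj (r *\<^sub>R one) = r *\<^sub>R one)"

definition trc :: "('a::real_vector \<Rightarrow> 'a) \<Rightarrow> 'a \<Rightarrow> 'a" where
  "trc cj x = x + cj x"

definition nrm :: "('a \<Rightarrow> 'a \<Rightarrow> 'a) \<Rightarrow> ('a \<Rightarrow> 'a) \<Rightarrow> 'a \<Rightarrow> 'a" where
  "nrm mul cj x = mul x (cj x)"

definition sph :: "('a::real_vector \<Rightarrow> 'a \<Rightarrow> 'a) \<Rightarrow> 'a \<Rightarrow> ('a \<Rightarrow> 'a) \<Rightarrow> 'a set" where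
  "sph mul one cj = {J. trc cj J = 0 \<and> nrm mul cj J = one}"

definition circ :: "('a::real_vector \<Rightarrow> 'a \<Rightarrow> 'a) \<Rightarrow> 'a \<Rightarrow> ('a \<Rightarrow> 'a) \<Rightarrow> complex set \<Rightarrow> 'a set" where
  "circ mul one cj D = {Re z *\<^sub>R one + Im z *\<^sub>R J | z J. z \<in> D \<and> J \<in> sph mul one cj}"

text \<open>The complexification A_C = A + i A, elements are pairs (a,b) = a + i b.\<close>
definition cmul :: "('a::real_vector \<Rightarrow> 'a \<Rightarrow> 'a) \<Rightarrow> 'a \<times> 'a \<Rightarrow> 'a \<times> 'a \<Rightarrow> 'a \<times> 'a" where
  "cmul mul p q = (mul (fst p) (fst q) - mul (snd p) (snd q),
                   mul (fst p) (snd q) + mul (snd p) (fst q))"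

definition cconj :: "'a::real_vector \<times> 'a \<Rightarrow> 'a \<times> 'a" where
  "cconj p = (fst p, - snd p)"

definition cinv :: "('a \<Rightarrow> 'a) \<Rightarrow> 'a \<times> 'a \<Rightarrow> 'a \<times> 'a" where
  "cinv cj p = (cj (fst p), cj (snd p))"

definition stem_on :: "complex set \<Rightarrow> (complex \<Rightarrow> 'a::real_vector \<times> 'a) \<Rightarrow> bool" where
  "stem_on D F \<longleftrightarrow> (\<forall>z\<in>D. F (cnj z) = cconj (F z))"

definition slice_of :: "('a::real_vector \<Rightarrow> 'a \<Rightarrow> 'a) \<Rightarrow> 'a \<Rightarrow> ('a \<Rightarrow> 'a)
    \<Rightarrow> (complex \<Rightarrow> 'a \<times> 'a) \<Rightarrow> 'a \<Rightarrow> 'a" where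
  "slice_of mul one cj F x = (SOME y. \<exists>z J. J \<in> sph mul one cj \<and>
       x = Re z *\<^sub>R one + Im z *\<^sub>R J \<and> y = fst (F z) + mul J (snd (F z)))"

definition stem_prod :: "('a::real_vector \<Rightarrow> 'a \<Rightarrow> 'a) \<Rightarrow> (complex \<Rightarrow> 'a \<times> 'a)
    \<Rightarrow> (complex \<Rightarrow> 'a \<times> 'a) \<Rightarrow> complex \<Rightarrow> 'a \<times> 'a" where
  "stem_prod mul F G = (\<lambda>z. cmul mul (F z) (G z))"

definition stem_cj :: "('a \<Rightarrow> 'a) \<Rightarrow> (complex \<Rightarrow> 'a \<times> 'a) \<Rightarrow> complex \<Rightarrow> 'a \<times> 'a" where
  "stem_cj cj F = (\<lambda>z. cinv cj (F z))"

definition stem_N :: "('a::real_vector \<Rightarrow> 'a \<Rightarrow> 'a) \<Rightarrow> ('a \<Rightarrow> 'a)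
    \<Rightarrow> (complex \<Rightarrow> 'a \<times> 'a) \<Rightarrow> complex \<Rightarrow> 'a \<times> 'a" where
  "stem_N mul cj F = stem_prod mul F (stem_cj cj F)"

definition slice_preserving_on :: "'a::real_vector \<Rightarrow> complex set \<Rightarrow> (complex \<Rightarrow> 'a \<times> 'a) \<Rightarrow> bool" where
  "slice_preserving_on one D F \<longleftrightarrow>
     (\<forall>z\<in>D. fst (F z) \<in> range (\<lambda>r. r *\<^sub>R one) \<and> snd (F z) \<in> range (\<lambda>r. r *\<^sub>R one))"

definition tame_on :: "('a::real_vector \<Rightarrow> 'a \<Rightarrow> 'a) \<Rightarrow> 'a \<Rightarrow> ('a \<Rightarrow> 'a) \<Rightarrow> complex set
    \<Rightarrow> (complex \<Rightarrow> 'a \<times> 'a) \<Rightarrow> bool" where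
  "tame_on mul one cj D F \<longleftrightarrow>
     slice_preserving_on one D (stem_N mul cj F) \<and>
     (\<forall>x\<in>circ mul one cj D. slice_of mul one cj (stem_N mul cj F) x
                            = slice_of mul one cj (stem_N mul cj (stem_cj cj F)) x)"

text \<open>Slice regular: F is C^1 on the open set D and (dF/dalpha + i dF/dbeta)/2 = 0,
 where i (a,b) = (-b,a).\<close>
definition slice_regular_on :: "complex set \<Rightarrow> (complex \<Rightarrow> 'a::euclidean_space \<times> 'a) \<Rightarrow> bool" where
  "slice_regular_on D F \<longleftrightarrow> open D \<and>
     (\<exists>F'. (\<forall>z\<in>D. (F has_derivative F' z) (at z)) \<and>
           continuous_on D (\<lambda>z. F' z 1) \<and> continuous_on D (\<lambda>z. F' z \<i>) \<and>
           (\<forall>z\<in>D. fst (F' z 1) - snd (F' z \<i>) = 0 \<and> snd (F' z 1) + fst (F' z \<i>) = 0))"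

definition slice_domain :: "complex set \<Rightarrow> bool" where
  "slice_domain D \<longleftrightarrow> open D \<and> connected D \<and> D \<inter> \<real> \<noteq> {}"

definition product_domain :: "complex set \<Rightarrow> bool" where
  "product_domain D \<longleftrightarrow> open D \<and> D \<inter> \<real> = {} \<and>
     (\<exists>D1 D2. components D = {D1, D2} \<and> D1 \<noteq> D2 \<and> cnj ` D1 = D2)"

end

theory Submission
  imports Defs "HOL-Complex_Analysis.Complex_Analysis"
begin



lemma four: "(4::real) *\<^sub>R v = v + v + v + v" for v :: "'b::real_vector"
proof -
  have "(4::real) *\<^sub>R v = (2 + 2) *\<^sub>R v" by simp
  also have "\<dots> = 2 *\<^sub>R v + 2 *\<^sub>R v" by (rule scaleR_left_distrib)
  finally show ?thesis by (simp add: scaleR_2 add.assoc)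
qed

locale altalg =
  fixes m :: "'b::real_vector \<Rightarrow> 'b \<Rightarrow> 'b" and e :: 'b
  assumes bil: "bilinear m" and unitl: "m e x = x" and unitr: "m x e = x"
  and alt1: "m (m x x) y = m x (m x y)" and alt2: "m (m y x) x = m y (m x x)"
begin

lemma lin[simp]:
  "m (a + b) c = m a c + m b c" "m a (b + c) = m a b + m a c"
  "m (a - b) c = m a c - m b c" "m a (b - c) = m a b - m a c"
  "m (- a) c = - m a c" "m a (- c) = - m a c"
  "m (r *\<^sub>R a) c = r *\<^sub>R m a c" "m a (r *\<^sub>R c) = r *\<^sub>R m a c"
  "m 0 c = 0" "m a 0 = 0"
  using bil by (simp_all add: bilinear_ladd bilinear_radd bilinear_lsub bilinear_rsub
      bilinear_lneg bilinear_rneg bilinear_lmul bilinear_rmul bilinear_lzero bilinear_rzero)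

lemma skewL: "m (m p q) r - m p (m q r) + (m (m q p) r - m q (m p r)) = 0"
proof -
  have "m (m (p+q) (p+q)) r = m (p+q) (m (p+q) r)" by (rule alt1)
  thus ?thesis using alt1[of p r] alt1[of q r] by (simp add: algebra_simps)
qed

lemma skewR: "m (m p q) r - m p (m q r) + (m (m p r) q - m p (m r q)) = 0"
proof -
  have "m (m p (q+r)) (q+r) = m p (m (q+r) (q+r))" by (rule alt2)
  thus ?thesis using alt2[of p q] alt2[of p r] by (simp add: algebra_simps)
qed

lemma moufang: "m (m (m x a) x) y = m x (m a (m x y))"
proof -
  have r1: "m (m (m a x) x) y - m (m a x) (m x y) + (m (m x (m a x)) y - m x (m (m a x) y)) = 0" by (rule skewL)
  have r2: "m (m (m x a) x) y - m (m x a) (m x y) + (m (m x (m x a)) y - m x (m (m x a) y)) = 0" by (rule skewL)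
  have r3: "m (m x x) (m a y) - m x (m x (m a y)) + (m (m x x) (m a y) - m x (m x (m a y))) = 0" by (rule skewL)
  have r4: "m (m x a) (m x y) - m x (m a (m x y)) + (m (m a x) (m x y) - m a (m x (m x y))) = 0" by (rule skewL)
  have r5: "m (m a (m x x)) y - m a (m (m x x) y) + (m (m (m x x) a) y - m (m x x) (m a y)) = 0" by (rule skewL)
  have r6: "m (m (m x x) a - m x (m x a) + (m (m x x) a - m x (m x a))) y = 0" using skewL[of x x a] by simp
  have r7: "m (m (m x x) a - m x (m x a) + (m (m x a) x - m x (m a x))) y = 0" using skewR[of x x a] by simp
  have r8: "m (m (m x a) x - m x (m a x) + (m (m a x) x - m a (m x x))) y = 0" using skewL[of x a x] by simp
  have r9: "m a (m (m x x) y - m x (m x y) + (m (m x x) y - m x (m x y))) = 0" using skewL[of x x y] by simp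
  have r10: "m x (m (m x a) y - m x (m a y) + (m (m a x) y - m a (m x y))) = 0" using skewL[of x a y] by simp
  have "(m (m (m x a) x) y - m x (m a (m x y))) + (m (m (m x a) x) y - m x (m a (m x y))) + (m (m (m x a) x) y - m x (m a (m x y))) + (m (m (m x a) x) y - m x (m a (m x y))) = 0 + (m (m (m a x) x) y - m (m a x) (m x y) + (m (m x (m a x)) y - m x (m (m a x) y))) + (m (m (m a x) x) y - m (m a x) (m x y) + (m (m x (m a x)) y - m x (m (m a x) y))) + (m (m (m x a) x) y - m (m x a) (m x y) + (m (m x (m x a)) y - m x (m (m x a) y))) + (m (m (m x a) x) y - m (m x a) (m x y) + (m (m x (m x a)) y - m x (m (m x a) y))) - (m (m x x) (m a y) - m x (m x (m a y)) + (m (m x x) (m a y) - m x (m x (m a y)))) + (m (m x a) (m x y) - m x (m a (m x y)) + (m (m a x) (m x y) - m a (m x (m x y)))) + (m (m x a) (m x y) - m x (m a (m x y)) + (m (m a x) (m x y) - m a (m x (m x y)))) - (m (m a (m x x)) y - m a (m (m x x) y) + (m (m (m x x) a) y - m (m x x) (m a y))) - (m (m a (m x x)) y - m a (m (m x x) y) + (m (m (m x x) a) y - m (m x x) (m a y))) - m (m (m x x) a - m x (m x a) + (m (m x x) a - m x (m x a))) y + m (m (m x x) a - m x (m x a) + (m (m x a) x - m x (m a x))) y + m (m (m x x) a - m x (m x a) + (m (m x a) x - m x (m a x))) y + m (m (m x x) a - m x (m x a) + (m (m x a) x - m x (m a x))) y + m (m (m x x) a - m x (m x a) + (m (m x a)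 x - m x (m a x))) y - m (m (m x a) x - m x (m a x) + (m (m a x) x - m a (m x x))) y - m (m (m x a) x - m x (m a x) + (m (m a x) x - m a (m x x))) y - m a (m (m x x) y - m x (m x y) + (m (m x x) y - m x (m x y))) + m x (m (m x a) y - m x (m a y) + (m (m a x) y - m a (m x y))) + m x (m (m x a) y - m x (m a y) + (m (m a x) y - m a (m x y)))"
    by (simp add: algebra_simps)
  also have "\<dots> = 0" using r1 r2 r3 r4 r5 r6 r7 r8 r9 r10 by simp
  finally have "(m (m (m x a) x) y - m x (m a (m x y))) + (m (m (m x a) x) y - m x (m a (m x y))) + (m (m (m x a) x) y - m x (m a (m x y))) + (m (m (m x a) x) y - m x (m a (m x y))) = 0" .
  moreover have "(4::real) *\<^sub>R (m (m (m x a) x) y - m x (m a (m x y))) = (m (m (m x a) x) y - m x (m a (m x y))) + (m (m (m x a) x) y - m x (m a (m x y))) + (m (m (m x a) x) y - m x (m a (m x y))) + (m (m (m x a) x) y - m x (m a (m x y)))"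
    by (rule four)
  ultimately have "(4::real) *\<^sub>R (m (m (m x a) x) y - m x (m a (m x y))) = 0" by simp
  thus ?thesis by simp
qed

lemma LIP:
  assumes xu: "m x u = e" and ux: "m u x = e"
  shows "m u (m x y) = y" "m x (m u y) = y"
proof -
  define P where "P w = m x (m u w)" for w
  define Q where "Q w = m u (m x w)" for w
  have PQ: "P w + Q w = 2 *\<^sub>R w" for w
    using skewL[of x u w] unfolding P_def Q_def by (simp add: xu ux unitl scaleR_2 algebra_simps)
  have PP: "P (P w) = P w" for w
    using moufang[of x u "m u w"] unfolding P_def by (simp add: xu unitl)
  have QQ: "Q (Q w) = Q w" for w
    using moufang[of u x "m x w"] unfolding Q_def by (simp add: ux unitl)
  have Plin: "P (a - b) = P a - P b" "P (r *\<^sub>R a) = r *\<^sub>R P a" for a b r unfolding P_def by simp_all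
  have Qy: "Q y = 2 *\<^sub>R y - P y" using PQ[of y] by (simp add: algebra_simps)
  have "Q (Q y) = 2 *\<^sub>R Q y - P (Q y)" using PQ[of "Q y"] by (simp add: algebra_simps)
  hence "Q (Q y) = 2 *\<^sub>R (2 *\<^sub>R y - P y) - P (2 *\<^sub>R y - P y)" by (simp only: Qy)
  hence "Q (Q y) = 2 *\<^sub>R (2 *\<^sub>R y - P y) - (2 *\<^sub>R P y - P y)"
    by (simp only: Plin PP)
  moreover have "Q (Q y) = 2 *\<^sub>R y - P y" using QQ PQ[of y] by (simp add: algebra_simps)
  ultimately have "2 *\<^sub>R y - P y = 2 *\<^sub>R (2 *\<^sub>R y - P y) - (2 *\<^sub>R P y - P y)" by simp
  hence "P y + P y = y + y" by (simp add: algebra_simps scaleR_2)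
  hence "(2::real) *\<^sub>R P y = 2 *\<^sub>R y" by (simp only: scaleR_2)
  hence Py: "P y = y" by simp
  with PQ[of y] have "Q y = y" by (simp add: scaleR_2)
  with Py show "m u (m x y) = y" "m x (m u y) = y" unfolding P_def Q_def by auto
qed

lemma cyc: "m (m a b) c - m a (m b c) = m (m b c) a - m b (m c a)"
proof -
  have h1: "m (m a b) c - m a (m b c) = - (m (m b a) c - m b (m a c))"
    by (subst eq_neg_iff_add_eq_0) (rule skewL)
  have h2: "m (m b c) a - m b (m c a) = - (m (m b a) c - m b (m a c))"
    by (subst eq_neg_iff_add_eq_0) (subst add.commute, rule skewR)
  show ?thesis by (simp only: h1 h2)
qed

end

lemma altalg_flip:
  assumes "altalg m e" shows "altalg (\<lambda>a b. m b a) e"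
proof -
  interpret altalg m e by fact
  show ?thesis
  proof
    show "bilinear (\<lambda>a b. m b a)" using bil unfolding bilinear_def by auto
  qed (simp_all add: unitl unitr alt1 alt2)
qed

context altalg begin

lemma RIP:
  assumes xu: "m x u = e" and ux: "m u x = e"
  shows "m (m y x) u = y" "m (m y u) x = y"
proof -
  interpret f: altalg "\<lambda>a b. m b a" e by (rule altalg_flip) (rule altalg_axioms)
  show "m (m y x) u = y" "m (m y u) x = y" using f.LIP[of x u y] xu ux by auto
qed

lemma inv_prod:
  assumes xu: "m x u = e" "m u x = e" and yv: "m y v = e" "m v y = e"
  shows "m (m x y) (m v u) = e"
proof -
  have 1: "m (m v u) x = v" using RIP(2)[OF xu, of v] .
  have 2: "m y (m v u) = u" using LIP(2)[OF yv, of u] .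
  have "m (m x y) (m v u) - m x (m y (m v u)) = m (m y (m v u)) x - m y (m (m v u) x)" by (rule cyc)
  also have "\<dots> = 0" using 1 2 xu yv by simp
  finally show ?thesis using 2 xu by simp
qed
end


definition sc :: "complex \<Rightarrow> 'a::real_vector \<times> 'a \<Rightarrow> 'a \<times> 'a" where
  "sc c p = (Re c *\<^sub>R fst p - Im c *\<^sub>R snd p, Re c *\<^sub>R snd p + Im c *\<^sub>R fst p)"

lemma sc_sc: "sc c (sc d p) = sc (c * d) p"
  by (simp add: sc_def algebra_simps)
lemma sc_one[simp]: "sc 1 p = p" by (simp add: sc_def)

lemma double_cancel: "x + x = y + y \<Longrightarrow> x = (y::'b::real_vector)"
proof -
  assume "x + x = y + y"
  hence "(2::real) *\<^sub>R x = 2 *\<^sub>R y" by (simp only: scaleR_2)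
  thus ?thesis by simp
qed

lemma dc2: "a + b = c + d \<Longrightarrow> a - b = c - (d::'b::real_vector) \<Longrightarrow> a + a = c + c"
proof -
  assume h1: "a + b = c + d" and h2: "a - b = c - d"
  have "a + a = (a + b) + (a - b)" by simp
  also have "\<dots> = (c + d) + (c - d)" using h1 h2 by simp
  finally show ?thesis by simp
qed

lemma dense_nz:
  assumes hol: "h holomorphic_on S" and S: "open S" "connected S" and z0: "z0 \<in> S" "h z0 \<noteq> 0"
    and w: "w \<in> S"
  shows "w \<in> closure {z\<in>S. h z \<noteq> 0}"
proof (rule ccontr)
  assume "w \<notin> closure {z\<in>S. h z \<noteq> 0}"
  then obtain e where e: "e > 0" and ee: "\<forall>y\<in>{z\<in>S. h z \<noteq> 0}. \<not> dist y w < e"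
    unfolding closure_approachable by blast
  obtain r where r: "r > 0" "ball w r \<subseteq> S" using S(1) w open_contains_ball by blast
  define d where "d = min e r"
  have d: "d > 0" using e r by (simp add: d_def)
  have U: "ball w d \<subseteq> S" using r unfolding d_def by auto
  have "h z = 0" if "z \<in> ball w d" for z
  proof -
    have "z \<in> S" using that U by auto
    moreover have "dist z w < e" using that unfolding d_def by (auto simp: dist_commute)
    ultimately show ?thesis using ee by auto
  qed
  hence "h z0 = 0"
    by (intro analytic_continuation[OF hol S(1) S(2) U w _ _ z0(1)]) (use d in \<open>auto simp: islimpt_ball\<close>)
  with z0 show False by simp
qed

lemma zero_ext:
  fixes K :: "complex \<Rightarrow> 'b::real_normed_vector"
  assumes K: "continuous_on S K" and S: "open S" and w: "w \<in> S" "w \<in> closure T"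
    and T: "\<forall>z\<in>T. K z = 0"
  shows "K w = 0"
proof -
  obtain x where x: "\<forall>n. x n \<in> T" "x \<longlonglongrightarrow> w" using w(2) closure_sequential by blast
  have "isCont K w" using K S w(1) continuous_on_eq_continuous_at by blast
  hence "(\<lambda>n. K (x n)) \<longlonglongrightarrow> K w" using x(2) isCont_tendsto_compose by blast
  moreover have "(\<lambda>n. K (x n)) = (\<lambda>n. 0)" using x(1) T by auto
  ultimately have "(\<lambda>n. 0::'b) \<longlonglongrightarrow> K w" by simp
  thus ?thesis using LIMSEQ_unique tendsto_const by metis
qed

lemma both_nz:
  assumes hf: "f holomorphic_on S" and hg: "g holomorphic_on S" and S: "open S" "connected S"
    and zf: "zf \<in> S" "f zf \<noteq> 0" and zg: "zg \<in> S" "g zg \<noteq> 0" and w: "w \<in> S"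
  shows "w \<in> closure {z\<in>S. f z * g z \<noteq> 0}"
proof -
  have "continuous (at zg) g"
    using holomorphic_on_imp_continuous_on[OF hg] S(1) zg(1) continuous_on_eq_continuous_at by blast
  then obtain r where r: "r > 0" "\<forall>y. dist zg y < r \<longrightarrow> g y \<noteq> 0" using continuous_at_avoid zg(2) by blast
  have "zg \<in> closure {z\<in>S. f z \<noteq> 0}" by (rule dense_nz[OF hf S zf zg(1)])
  then obtain y where y: "y \<in> S" "f y \<noteq> 0" "dist y zg < r" using r(1) unfolding closure_approachable by blast
  have "g y \<noteq> 0" using r y by (simp add: dist_commute)
  with y have "(\<lambda>z. f z * g z) y \<noteq> 0" by simp
  from dense_nz[OF holomorphic_on_mult[OF hf hg] S y(1) this w] show ?thesis .
qed

lemma comp_conj: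
  assumes pd: "product_domain D" and w: "w \<in> D" and z0: "z0 \<in> D"
  shows "z0 \<in> connected_component_set D w \<or> cnj z0 \<in> connected_component_set D w"
proof -
  obtain D1 D2 where c: "components D = {D1, D2}" and ne: "D1 \<noteq> D2" and cD: "cnj ` D1 = D2"
    using pd unfolding product_domain_def by blast
  define S where "S = connected_component_set D w"
  define S0 where "S0 = connected_component_set D z0"
  have S: "S \<in> {D1, D2}" unfolding S_def using componentsI[OF w] c by simp
  have S0: "S0 \<in> {D1, D2}" unfolding S0_def using componentsI[OF z0] c by simp
  have z0S0: "z0 \<in> S0" unfolding S0_def using z0 by (simp add: connected_component_refl)
  show ?thesis
  proof (cases "S0 = S")
    case True thus ?thesis using z0S0 unfolding S_def by simp
  next
    case False
    hence "(S0 = D1 \<and> S = D2) \<or> (S0 = D2 \<and> S = D1)" using S S0 by auto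
    thus ?thesis
    proof
      assume "S0 = D1 \<and> S = D2"
      thus ?thesis using z0S0 cD unfolding S_def by auto
    next
      assume a: "S0 = D2 \<and> S = D1"
      then obtain z1 where "z1 \<in> D1" "z0 = cnj z1" using z0S0 cD by auto
      thus ?thesis using a unfolding S_def by simp
    qed
  qed
qed

lemma nbhd:
  fixes f g :: "complex \<Rightarrow> complex"
  assumes dom: "slice_domain D \<or> product_domain D" and w: "w \<in> D"
    and zf: "zf \<in> D" "f zf \<noteq> 0" and zg: "zg \<in> D" "g zg \<noteq> 0"
    and sf: "\<forall>z\<in>D. f (cnj z) = cnj (f z)" and sg: "\<forall>z\<in>D. g (cnj z) = cnj (g z)"
  shows "\<exists>S. open S \<and> connected S \<and> S \<subseteq> D \<and> w \<in> S \<and> (\<exists>z\<in>S. f z \<noteq> 0) \<and> (\<exists>z\<in>S. g z \<noteq> 0)"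
  using dom
proof
  assume "slice_domain D"
  thus ?thesis using w zf zg unfolding slice_domain_def by blast
next
  assume pd: "product_domain D"
  define S where "S = connected_component_set D w"
  have oD: "open D" using pd unfolding product_domain_def by auto
  have "open S" "connected S" "S \<subseteq> D" "w \<in> S"
    unfolding S_def using oD w
    by (auto simp: open_connected_component connected_component_subset connected_component_refl)
  moreover have "\<exists>z\<in>S. f z \<noteq> 0"
    using comp_conj[OF pd w zf(1)] zf sf unfolding S_def by force
  moreover have "\<exists>z\<in>S. g z \<noteq> 0"
    using comp_conj[OF pd w zg(1)] zg sg unfolding S_def by force
  ultimately show ?thesis by blast
qed

locale star =
  fixes mul :: "'a::euclidean_space \<Rightarrow> 'a \<Rightarrow> 'a" and one :: 'a and cj :: "'a \<Rightarrow> 'a"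
  assumes alg: "alt_star_algebra mul one cj"
begin

lemma bil: "bilinear mul" and one_ne: "one \<noteq> 0"
  and unitl: "mul one x = x" and unitr: "mul x one = x"
  and lcj: "linear cj" and cjcj[simp]: "cj (cj x) = x" and cjmul: "cj (mul x y) = mul (cj y) (cj x)"
  and cjr: "cj (r *\<^sub>R one) = r *\<^sub>R one"
  using alg unfolding alt_star_algebra_def by auto

lemma a1: "mul (mul x x) y = mul x (mul x y)" and a2: "mul (mul y x) x = mul y (mul x x)"
  using alg unfolding alt_star_algebra_def assoc3_def by auto

sublocale A: altalg mul one
  by unfold_locales (auto simp: bil unitl unitr a1 a2)

lemma cjlin[simp]: "cj (a + b) = cj a + cj b" "cj (a - b) = cj a - cj b" "cj (- a) = - cj a"
  "cj (r *\<^sub>R a) = r *\<^sub>R cj a" "cj 0 = 0"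
  using lcj by (simp_all add: linear_add linear_diff linear_neg linear_scale linear_0)

lemma cj_one[simp]: "cj one = one" using cjr[of 1] by simp

abbreviation cm where "cm \<equiv> cmul mul"
abbreviation E where "E \<equiv> (one, 0::'a)"

lemma cm_simps: "cm p q = (mul (fst p) (fst q) - mul (snd p) (snd q), mul (fst p) (snd q) + mul (snd p) (fst q))"
  by (simp add: cmul_def)

lemma bil_cm: "bilinear cm"
  unfolding bilinear_def
proof (intro conjI allI)
  fix x :: "'a \<times> 'a"
  show "linear (cm x)"
    by (rule linearI) (auto simp: cmul_def algebra_simps scaleR_diff_right)
next
  fix y :: "'a \<times> 'a"
  show "linear (\<lambda>x. cm x y)"
    by (rule linearI) (auto simp: cmul_def algebra_simps scaleR_diff_right)
qed

sublocale C: altalg cm E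
proof unfold_locales
  show "bilinear cm" by (rule bil_cm)
  fix x y :: "'a \<times> 'a"
  show "cm E x = x" "cm x E = x" by (simp_all add: cmul_def unitl unitr)
  obtain a b where x: "x = (a,b)" by fastforce
  obtain c d where y: "y = (c,d)" by fastforce
  show "cm (cm x x) y = cm x (cm x y)"
    using a1[of a c] a1[of b c] a1[of a d] a1[of b d]
      A.skewL[of a b d] A.skewL[of a b c]
    by (simp add: x y cmul_def algebra_simps)
  show "cm (cm y x) x = cm y (cm x x)"
    using a2[of c a] a2[of c b] a2[of d a] a2[of d b]
      A.skewR[of c a b] A.skewR[of d a b]
    by (simp add: x y cmul_def algebra_simps)
qed


lemma cm_sc_l: "cm (sc c p) q = sc c (cm p q)"
  by (simp add: cmul_def sc_def algebra_simps)
lemma cm_sc_r: "cm p (sc c q) = sc c (cm p q)"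
  by (simp add: cmul_def sc_def algebra_simps)

lemma cinv_cinv[simp]: "cinv cj (cinv cj p) = p" by (simp add: cinv_def)
lemma cinv_cm: "cinv cj (cm p q) = cm (cinv cj q) (cinv cj p)"
  by (simp add: cinv_def cmul_def cjmul algebra_simps)
lemma cinv_sc: "cinv cj (sc c p) = sc c (cinv cj p)"
  by (simp add: cinv_def sc_def)

lemma KP:
  assumes p1: "cm p (cinv cj p) = sc a E" and p2: "cm (cinv cj p) p = sc a E"
    and q1: "cm q (cinv cj q) = sc b E" and q2: "cm (cinv cj q) q = sc b E"
    and a: "a \<noteq> 0" and b: "b \<noteq> 0"
  shows "cm (cm p q) (cm (cinv cj q) (cinv cj p)) = sc (a * b) E"
proof -
  define u where "u = sc (1/a) (cinv cj p)"
  define v where "v = sc (1/b) (cinv cj q)"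
  have "cm p u = E" "cm u p = E" using p1 p2 a by (simp_all add: u_def cm_sc_l cm_sc_r sc_sc)
  moreover have "cm q v = E" "cm v q = E" using q1 q2 b by (simp_all add: v_def cm_sc_l cm_sc_r sc_sc)
  ultimately have "cm (cm p q) (cm v u) = E" by (intro C.inv_prod) auto
  hence "sc (1/b * (1/a)) (cm (cm p q) (cm (cinv cj q) (cinv cj p))) = E"
    by (simp add: u_def v_def cm_sc_l cm_sc_r sc_sc mult.commute)
  hence "sc (a*b) (sc (1/b * (1/a)) (cm (cm p q) (cm (cinv cj q) (cinv cj p)))) = sc (a*b) E" by simp
  thus ?thesis using a b by (simp add: sc_sc)
qed


lemma sphD:
  assumes "J \<in> sph mul one cj"
  shows "cj J = - J" "mul J J = - one" "J \<noteq> 0" "- J \<in> sph mul one cj" "mul J (cj J) = one"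
proof -
  have t: "J + cj J = 0" and n: "mul J (cj J) = one"
    using assms by (auto simp: sph_def trc_def nrm_def)
  show c: "cj J = - J" using t by (simp add: eq_neg_iff_add_eq_0 add.commute)
  have "- mul J J = one" using n c by simp
  thus "mul J J = - one" by (metis minus_minus)
  show "J \<noteq> 0" using n one_ne by auto
  show "- J \<in> sph mul one cj" using t n c by (simp add: sph_def trc_def nrm_def)
  show "mul J (cj J) = one" by (rule n)
qed

lemma rep_unique:
  assumes J: "J \<in> sph mul one cj" and J': "J' \<in> sph mul one cj"
    and eq: "a *\<^sub>R one + b *\<^sub>R J = a' *\<^sub>R one + b' *\<^sub>R J'"
  shows "a = a' \<and> ((b = b' \<and> (b = 0 \<or> J = J')) \<or> (b' = - b \<and> J' = - J))"
proof -
  have "cj (a *\<^sub>R one + b *\<^sub>R J) = cj (a' *\<^sub>R one + b' *\<^sub>R J')" using eq by simp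
  hence eq2: "a *\<^sub>R one - b *\<^sub>R J = a' *\<^sub>R one - b' *\<^sub>R J'" using sphD(1)[OF J] sphD(1)[OF J'] by simp
  from eq eq2 have "(a *\<^sub>R one + b *\<^sub>R J) + (a *\<^sub>R one - b *\<^sub>R J) = (a' *\<^sub>R one + b' *\<^sub>R J') + (a' *\<^sub>R one - b' *\<^sub>R J')" by simp
  hence "a *\<^sub>R one + a *\<^sub>R one = a' *\<^sub>R one + a' *\<^sub>R one" by (simp add: algebra_simps)
  hence "a *\<^sub>R one = a' *\<^sub>R one" by (rule double_cancel)
  hence aa: "a = a'" using one_ne by (simp add: scaleR_cancel_right)
  with eq have bb: "b *\<^sub>R J = b' *\<^sub>R J'" by simp
  show ?thesis
  proof (cases "b = 0")
    case True
    with bb sphD(3)[OF J'] have "b' = 0" by simp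
    with True aa show ?thesis by simp
  next
    case False
    have b': "b' \<noteq> 0" using bb False sphD(3)[OF J] by auto
    define t where "t = b / b'"
    have "J' = (1/b') *\<^sub>R (b' *\<^sub>R J')" using b' by simp
    also have "\<dots> = t *\<^sub>R J" unfolding bb[symmetric] t_def by simp
    finally have JJ: "J' = t *\<^sub>R J" .
    have "one = mul J' (cj J')" using sphD(5)[OF J'] by simp
    also have "\<dots> = (t*t) *\<^sub>R mul J (cj J)" using JJ by simp
    also have "\<dots> = (t*t) *\<^sub>R one" using sphD(5)[OF J] by simp
    finally have "(t*t) *\<^sub>R one = 1 *\<^sub>R one" by simp
    hence "t * t = 1" using one_ne by (simp only: scaleR_cancel_right) simp
    hence "t = 1 \<or> t = -1" by (metis mult_cancel_left1 square_eq_1_iff)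
    thus ?thesis
    proof
      assume "t = 1" thus ?thesis using JJ aa b' unfolding t_def by simp
    next
      assume "t = -1" thus ?thesis using JJ aa b' unfolding t_def by (simp add: field_simps)
    qed
  qed
qed


lemma SL:
  assumes st: "stem_on D H" and z: "z \<in> D" and J: "J \<in> sph mul one cj"
  shows "slice_of mul one cj H (Re z *\<^sub>R one + Im z *\<^sub>R J) = fst (H z) + mul J (snd (H z))"
  unfolding slice_of_def
proof (rule someI2)
  show "\<exists>z' J'. J' \<in> sph mul one cj \<and> Re z *\<^sub>R one + Im z *\<^sub>R J = Re z' *\<^sub>R one + Im z' *\<^sub>R J' \<and>
      fst (H z) + mul J (snd (H z)) = fst (H z') + mul J' (snd (H z'))" using J by blast
next
  fix y assume "\<exists>z' J'. J' \<in> sph mul one cj \<and> Re z *\<^sub>R one + Im z *\<^sub>R J = Re z' *\<^sub>R one + Im z' *\<^sub>R J' \<and>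
      y = fst (H z') + mul J' (snd (H z'))"
  then obtain z' J' where J': "J' \<in> sph mul one cj" and eq: "Re z *\<^sub>R one + Im z *\<^sub>R J = Re z' *\<^sub>R one + Im z' *\<^sub>R J'"
    and y: "y = fst (H z') + mul J' (snd (H z'))" by blast
  have stz: "H (cnj z) = cconj (H z)" using st z unfolding stem_on_def by auto
  from rep_unique[OF J J' eq] have re: "Re z = Re z'"
    and c: "(Im z = Im z' \<and> (Im z = 0 \<or> J = J')) \<or> (Im z' = - Im z \<and> J' = - J)" by auto
  from c show "y = fst (H z) + mul J (snd (H z))"
  proof (elim disjE conjE)
    assume i: "Im z = Im z'" and "Im z = 0"
    hence zz: "z' = z" "cnj z = z" using re by (auto simp: complex_eq_iff)
    hence "H z = (fst (H z), - snd (H z))" using stz by (simp add: cconj_def)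
    hence "snd (H z) = - snd (H z)" by (metis snd_conv)
    hence "snd (H z) + snd (H z) = 0 + 0" by (simp add: eq_neg_iff_add_eq_0)
    hence "snd (H z) = 0" by (rule double_cancel)
    thus ?thesis using y zz by simp
  next
    assume "Im z = Im z'" "J = J'"
    moreover have "z' = z" using re \<open>Im z = Im z'\<close> by (simp add: complex_eq_iff)
    ultimately show ?thesis using y by simp
  next
    assume i: "Im z' = - Im z" and jj: "J' = - J"
    hence "z' = cnj z" using re by (simp add: complex_eq_iff)
    thus ?thesis using y jj stz by (simp add: cconj_def)
  qed
qed

lemma circE:
  assumes "x \<in> circ mul one cj D"
  obtains z J where "z \<in> D" "J \<in> sph mul one cj" "x = Re z *\<^sub>R one + Im z *\<^sub>R J"
  using assms unfolding circ_def by blast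

lemma circI: "z \<in> D \<Longrightarrow> J \<in> sph mul one cj \<Longrightarrow> Re z *\<^sub>R one + Im z *\<^sub>R J \<in> circ mul one cj D"
  unfolding circ_def by blast

lemma slice_eq_stem:
  assumes sph: "J \<in> sph mul one cj" and sH: "stem_on D H" and sK: "stem_on D K"
    and eq: "\<forall>x\<in>circ mul one cj D. slice_of mul one cj H x = slice_of mul one cj K x"
    and z: "z \<in> D"
  shows "H z = K z"
proof -
  have mJ: "- J \<in> sph mul one cj" using sphD(4)[OF sph] .
  have e1: "fst (H z) + mul J (snd (H z)) = fst (K z) + mul J (snd (K z))"
    using eq circI[OF z sph] SL[OF sH z sph] SL[OF sK z sph] by simp
  have e2: "fst (H z) - mul J (snd (H z)) = fst (K z) - mul J (snd (K z))"
    using eq circI[OF z mJ] SL[OF sH z mJ] SL[OF sK z mJ] by simp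
  from e1 e2 have "fst (H z) + fst (H z) = fst (K z) + fst (K z)"
    by (rule dc2)
  hence f: "fst (H z) = fst (K z)" by (rule double_cancel)
  with e1 have "mul J (snd (H z)) = mul J (snd (K z))" by simp
  hence "mul J (mul J (snd (H z))) = mul J (mul J (snd (K z)))" by simp
  moreover have JJ: "mul J (mul J y) = - y" for y
  proof -
    have "mul J (mul J y) = mul (mul J J) y" by (simp add: a1)
    also have "\<dots> = - y" by (simp add: sphD(2)[OF sph] unitl)
    finally show ?thesis .
  qed
  ultimately have "snd (H z) = snd (K z)" by simp
  with f show ?thesis by (simp add: prod_eq_iff)
qed

lemma stem_slice_eq:
  assumes sH: "stem_on D H" and sK: "stem_on D K" and eq: "\<forall>z\<in>D. H z = K z"
  shows "\<forall>x\<in>circ mul one cj D. slice_of mul one cj H x = slice_of mul one cj K x"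
proof
  fix x assume "x \<in> circ mul one cj D"
  then obtain z J where z: "z \<in> D" and J: "J \<in> sph mul one cj" and x: "x = Re z *\<^sub>R one + Im z *\<^sub>R J"
    by (rule circE)
  show "slice_of mul one cj H x = slice_of mul one cj K x"
    using SL[OF sH z J] SL[OF sK z J] eq z x by simp
qed

lemma stem_prod_stem: "stem_on D F \<Longrightarrow> stem_on D G \<Longrightarrow> stem_on D (stem_prod mul F G)"
  by (simp add: stem_on_def stem_prod_def cmul_def cconj_def algebra_simps)
lemma stem_cj_stem: "stem_on D F \<Longrightarrow> stem_on D (stem_cj cj F)"
  by (simp add: stem_on_def stem_cj_def cinv_def cconj_def)
lemma stem_N_stem: "stem_on D F \<Longrightarrow> stem_on D (stem_N mul cj F)"
  by (simp add: stem_N_def stem_prod_stem stem_cj_stem)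


lemma bb_cm: "bounded_bilinear cm" by (rule bilinear_conv_bounded_bilinear[THEN iffD1, OF bil_cm])

lemma lin_cinv: "linear (cinv cj)"
  by (rule linearI) (auto simp: cinv_def)
lemma bl_cinv: "bounded_linear (cinv cj)" by (rule linear_conv_bounded_linear[THEN iffD1, OF lin_cinv])

definition phi :: "'a \<Rightarrow> real" where "phi v = (v \<bullet> one) / (one \<bullet> one)"
definition Phi :: "'a \<times> 'a \<Rightarrow> complex" where "Phi p = Complex (phi (fst p)) (phi (snd p))"

lemma phi_simps[simp]: "phi (a + b) = phi a + phi b" "phi (a - b) = phi a - phi b" "phi (- a) = - phi a"
  "phi (r *\<^sub>R a) = r * phi a" "phi 0 = 0"
  by (simp_all add: phi_def inner_add_left inner_diff_left add_divide_distrib diff_divide_distrib)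
lemma phi_one[simp]: "phi one = 1" using one_ne by (simp add: phi_def)

lemma lin_Phi: "linear Phi"
  by (rule linearI) (auto simp: Phi_def complex_eq_iff)
lemma bl_Phi: "bounded_linear Phi" by (rule linear_conv_bounded_linear[THEN iffD1, OF lin_Phi])

lemma sc_add: "sc c (p + q) = sc c p + sc c q" by (simp add: sc_def algebra_simps)
lemma sc_E: "sc c E = (Re c *\<^sub>R one, Im c *\<^sub>R one)" by (simp add: sc_def)
lemma Phi_sc: "Phi (sc c p) = c * Phi p" by (simp add: Phi_def sc_def complex_eq_iff)
lemma Phi_scE[simp]: "Phi (sc c E) = c" by (simp add: Phi_def sc_def complex_eq_iff)
lemma Phi_cconj: "Phi (cconj p) = cnj (Phi p)" by (simp add: Phi_def cconj_def complex_eq_iff)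
lemma Phi_real: "Phi (r *\<^sub>R p) = complex_of_real r * Phi p" by (simp add: Phi_def complex_eq_iff)
lemma sc_Phi:
  assumes "fst p = a *\<^sub>R one" "snd p = b *\<^sub>R one"
  shows "p = sc (Phi p) E"
  using assms by (simp add: Phi_def sc_def prod_eq_iff)

lemma dprod:
  assumes "(F has_derivative F') (at z)" "(G has_derivative G') (at z)"
  shows "((\<lambda>w. cm (F w) (G w)) has_derivative (\<lambda>h. cm (F z) (G' h) + cm (F' h) (G z))) (at z)"
  using bounded_bilinear.FDERIV[OF bb_cm assms] .

lemma dcinv:
  assumes "(F has_derivative F') (at z)"
  shows "((\<lambda>w. cinv cj (F w)) has_derivative (\<lambda>h. cinv cj (F' h))) (at z)"
  using bounded_linear.has_derivative[OF bl_cinv assms] .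

lemma holo:
  assumes d: "(H has_derivative H') (at z)" and cr: "H' \<i> = sc \<i> (H' 1)"
  shows "((\<lambda>w. Phi (H w)) has_field_derivative Phi (H' 1)) (at z)"
proof -
  have d2: "((\<lambda>w. Phi (H w)) has_derivative (\<lambda>h. Phi (H' h))) (at z)"
    using bounded_linear.has_derivative[OF bl_Phi d] .
  have lin: "linear H'" using has_derivative_linear[OF d] .
  have P: "Phi (H' h) = Phi (H' 1) * h" for h :: complex
  proof -
    have h: "h = Re h *\<^sub>R 1 + Im h *\<^sub>R \<i>" by (simp add: complex_eq_iff)
    have "H' h = Re h *\<^sub>R H' 1 + Im h *\<^sub>R H' \<i>"
      by (subst h) (simp add: linear_add[OF lin] linear_scale[OF lin])
    hence "Phi (H' h) = Re h * Phi (H' 1) + Im h * (\<i> * Phi (H' 1))"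
      using cr by (simp add: linear_add[OF lin_Phi] Phi_real Phi_sc)
    also have "\<dots> = Phi (H' 1) * (Re h + \<i> * Im h)" by (simp add: algebra_simps)
    also have "Re h + \<i> * Im h = h" by (simp add: complex_eq_iff)
    finally show ?thesis .
  qed
  have eq: "(\<lambda>h. Phi (H' h)) = (*) (Phi (H' 1))"
  proof
    fix h show "Phi (H' h) = Phi (H' 1) * h" by (rule P)
  qed
  show ?thesis unfolding has_field_derivative_def using d2 by (simp only: eq)
qed


lemma sc_i: "sc \<i> p = (- snd p, fst p)" by (simp add: sc_def)

lemma cplx_mul:
  assumes J: "J \<in> sph mul one cj"
  shows "mul (a *\<^sub>R one + mul J (b *\<^sub>R one)) (c *\<^sub>R one + mul J (d *\<^sub>R one))
       = (a*c - b*d) *\<^sub>R one + mul J ((a*d + b*c) *\<^sub>R one)"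
  using sphD(2)[OF J] by (simp add: unitl unitr algebra_simps)

lemma prod_cr:
  assumes "F' \<i> = sc \<i> (F' 1)" "G' \<i> = sc \<i> (G' 1)"
  shows "cm p (G' \<i>) + cm (F' \<i>) q = sc \<i> (cm p (G' 1) + cm (F' 1) q)"
  using assms by (simp add: cm_sc_l cm_sc_r sc_add)

lemma N_holo:
  assumes oD: "open D" and dF: "\<forall>z\<in>D. (F has_derivative F' z) (at z)"
    and cr: "\<forall>z\<in>D. F' z \<i> = sc \<i> (F' z 1)"
  shows "(\<lambda>z. Phi (cm (F z) (cinv cj (F z)))) holomorphic_on D"
proof (rule holomorphic_on_open[OF oD, THEN iffD2], intro ballI exI)
  fix z assume z: "z \<in> D"
  have d: "((\<lambda>w. cm (F w) (cinv cj (F w))) has_derivative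
      (\<lambda>h. cm (F z) (cinv cj (F' z h)) + cm (F' z h) (cinv cj (F z)))) (at z)"
    by (rule dprod[OF dF[rule_format, OF z] dcinv[OF dF[rule_format, OF z]]])
  have "cm (F z) (cinv cj (F' z \<i>)) + cm (F' z \<i>) (cinv cj (F z))
     = sc \<i> (cm (F z) (cinv cj (F' z 1)) + cm (F' z 1) (cinv cj (F z)))"
    using cr z by (simp add: cinv_sc cm_sc_l cm_sc_r sc_add)
  from holo[OF d, simplified, OF this]
  show "((\<lambda>z. Phi (cm (F z) (cinv cj (F z)))) has_field_derivative
     Phi (cm (F z) (cinv cj (F' z 1)) + cm (F' z 1) (cinv cj (F z)))) (at z)" .
qed

lemma cont_cm: "continuous_on D F \<Longrightarrow> continuous_on D G \<Longrightarrow> continuous_on D (\<lambda>z. cm (F z) (G z))"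
  by (rule bounded_bilinear.continuous_on[OF bb_cm])
lemma cont_cinv: "continuous_on D F \<Longrightarrow> continuous_on D (\<lambda>z. cinv cj (F z))"
  by (rule bounded_linear.continuous_on[OF bl_cinv])


lemma reg_data:
  assumes "slice_regular_on D F"
  obtains F' where "open D" "\<forall>z\<in>D. (F has_derivative F' z) (at z)"
    "continuous_on D (\<lambda>z. F' z 1)" "continuous_on D (\<lambda>z. F' z \<i>)"
    "\<forall>z\<in>D. F' z \<i> = sc \<i> (F' z 1)" "continuous_on D F"
proof -
  from assms obtain F' where o: "open D" and d: "\<forall>z\<in>D. (F has_derivative F' z) (at z)"
    and c1: "continuous_on D (\<lambda>z. F' z 1)" and ci: "continuous_on D (\<lambda>z. F' z \<i>)"
    and cr: "\<forall>z\<in>D. fst (F' z 1) - snd (F' z \<i>) = 0 \<and> snd (F' z 1) + fst (F' z \<i>) = 0"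
    unfolding slice_regular_on_def by blast
  have "\<forall>z\<in>D. F' z \<i> = sc \<i> (F' z 1)"
  proof
    fix z assume "z \<in> D"
    with cr have "fst (F' z \<i>) = - snd (F' z 1)" "snd (F' z \<i>) = fst (F' z 1)"
      by (auto simp: eq_neg_iff_add_eq_0 add.commute)
    thus "F' z \<i> = sc \<i> (F' z 1)" by (simp add: sc_i prod_eq_iff)
  qed
  moreover have "continuous_on D F"
    using d by (meson continuous_at_imp_continuous_on has_derivative_continuous)
  ultimately show ?thesis using that o d c1 ci by blast
qed

lemma tame_data:
  assumes J0: "J0 \<in> sph mul one cj" and st: "stem_on D F" and t: "tame_on mul one cj D F"
  shows "\<forall>z\<in>D. cm (F z) (cinv cj (F z)) = sc (Phi (cm (F z) (cinv cj (F z)))) E"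
    "\<forall>z\<in>D. cm (cinv cj (F z)) (F z) = cm (F z) (cinv cj (F z))"
proof -
  have sp: "slice_preserving_on one D (stem_N mul cj F)" and
    eq: "\<forall>x\<in>circ mul one cj D. slice_of mul one cj (stem_N mul cj F) x = slice_of mul one cj (stem_N mul cj (stem_cj cj F)) x"
    using t unfolding tame_on_def by auto
  have NF: "stem_N mul cj F z = cm (F z) (cinv cj (F z))" for z
    by (simp add: stem_N_def stem_prod_def stem_cj_def)
  show "\<forall>z\<in>D. cm (F z) (cinv cj (F z)) = sc (Phi (cm (F z) (cinv cj (F z)))) E"
  proof
    fix z assume "z \<in> D"
    with sp obtain a b where "fst (stem_N mul cj F z) = a *\<^sub>R one" "snd (stem_N mul cj F z) = b *\<^sub>R one"
      unfolding slice_preserving_on_def by fastforce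
    from sc_Phi[OF this] show "cm (F z) (cinv cj (F z)) = sc (Phi (cm (F z) (cinv cj (F z)))) E" by (simp add: NF)
  qed
  show "\<forall>z\<in>D. cm (cinv cj (F z)) (F z) = cm (F z) (cinv cj (F z))"
  proof
    fix z assume z: "z \<in> D"
    have "stem_N mul cj F z = stem_N mul cj (stem_cj cj F) z"
      by (rule slice_eq_stem[OF J0 stem_N_stem[OF st] stem_N_stem[OF stem_cj_stem[OF st]] eq z])
    thus "cm (cinv cj (F z)) (F z) = cm (F z) (cinv cj (F z))"
      by (simp add: NF stem_N_def stem_prod_def stem_cj_def)
  qed
qed


lemma main:
  assumes sph_ne: "sph mul one cj \<noteq> {}"
    and dom: "slice_domain D \<or> product_domain D"
    and stemF: "stem_on D F" and stemG: "stem_on D G"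
    and regF: "slice_regular_on D F" and regG: "slice_regular_on D G"
    and tameF: "tame_on mul one cj D F" and tameG: "tame_on mul one cj D G"
    and NF: "\<exists>x\<in>circ mul one cj D. slice_of mul one cj (stem_N mul cj F) x \<noteq> 0"
    and NG: "\<exists>x\<in>circ mul one cj D. slice_of mul one cj (stem_N mul cj G) x \<noteq> 0"
  shows "(\<forall>x\<in>circ mul one cj D.
            slice_of mul one cj (stem_N mul cj (stem_prod mul F G)) x
              = mul (slice_of mul one cj (stem_N mul cj F) x) (slice_of mul one cj (stem_N mul cj G) x)
          \<and> mul (slice_of mul one cj (stem_N mul cj F) x) (slice_of mul one cj (stem_N mul cj G) x)
              = mul (slice_of mul one cj (stem_N mul cj G) x) (slice_of mul one cj (stem_N mul cj F) x))
         \<and> slice_regular_on D (stem_prod mul F G)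
         \<and> tame_on mul one cj D (stem_prod mul F G)"
proof -
  obtain J0 where J0: "J0 \<in> sph mul one cj" using sph_ne by blast
  obtain F' where oD: "open D" and dF: "\<forall>z\<in>D. (F has_derivative F' z) (at z)"
    and cF1: "continuous_on D (\<lambda>z. F' z 1)" and cFi: "continuous_on D (\<lambda>z. F' z \<i>)"
    and crF: "\<forall>z\<in>D. F' z \<i> = sc \<i> (F' z 1)" and contF: "continuous_on D F"
    by (rule reg_data[OF regF])
  obtain G' where dG: "\<forall>z\<in>D. (G has_derivative G' z) (at z)"
    and cG1: "continuous_on D (\<lambda>z. G' z 1)" and cGi: "continuous_on D (\<lambda>z. G' z \<i>)"
    and crG: "\<forall>z\<in>D. G' z \<i> = sc \<i> (G' z 1)" and contG: "continuous_on D G"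
    by (rule reg_data[OF regG])
  define nF where "nF = (\<lambda>z. Phi (cm (F z) (cinv cj (F z))))"
  define nG where "nG = (\<lambda>z. Phi (cm (G z) (cinv cj (G z))))"
  have NFe: "stem_N mul cj F z = cm (F z) (cinv cj (F z))" for z
    by (simp add: stem_N_def stem_prod_def stem_cj_def)
  have NGe: "stem_N mul cj G z = cm (G z) (cinv cj (G z))" for z
    by (simp add: stem_N_def stem_prod_def stem_cj_def)
  have TF1: "\<forall>z\<in>D. cm (F z) (cinv cj (F z)) = sc (nF z) E"
    and TF2: "\<forall>z\<in>D. cm (cinv cj (F z)) (F z) = sc (nF z) E"
    using tame_data[OF J0 stemF tameF] unfolding nF_def by auto
  have TG1: "\<forall>z\<in>D. cm (G z) (cinv cj (G z)) = sc (nG z) E"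
    and TG2: "\<forall>z\<in>D. cm (cinv cj (G z)) (G z) = sc (nG z) E"
    using tame_data[OF J0 stemG tameG] unfolding nG_def by auto
  have holF: "nF holomorphic_on D" unfolding nF_def by (rule N_holo[OF oD dF crF])
  have holG: "nG holomorphic_on D" unfolding nG_def by (rule N_holo[OF oD dG crG])
  have symF: "\<forall>z\<in>D. nF (cnj z) = cnj (nF z)"
    using stem_N_stem[OF stemF] unfolding stem_on_def nF_def NFe by (simp add: Phi_cconj)
  have symG: "\<forall>z\<in>D. nG (cnj z) = cnj (nG z)"
    using stem_N_stem[OF stemG] unfolding stem_on_def nG_def NGe by (simp add: Phi_cconj)
  have nzF: "\<exists>z\<in>D. nF z \<noteq> 0"
  proof -
    from NF obtain x where x: "x \<in> circ mul one cj D" "slice_of mul one cj (stem_N mul cj F) x \<noteq> 0" by blast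
    obtain z J where z: "z \<in> D" "J \<in> sph mul one cj" "x = Re z *\<^sub>R one + Im z *\<^sub>R J"
      using circE[OF x(1)] by blast
    have "nF z \<noteq> 0"
    proof
      assume "nF z = 0"
      hence "stem_N mul cj F z = (0, 0)" using TF1 z(1) by (simp add: NFe sc_E)
      thus False using x(2) SL[OF stem_N_stem[OF stemF] z(1,2)] z(3) by simp
    qed
    with z show ?thesis by blast
  qed
  have nzG: "\<exists>z\<in>D. nG z \<noteq> 0"
  proof -
    from NG obtain x where x: "x \<in> circ mul one cj D" "slice_of mul one cj (stem_N mul cj G) x \<noteq> 0" by blast
    obtain z J where z: "z \<in> D" "J \<in> sph mul one cj" "x = Re z *\<^sub>R one + Im z *\<^sub>R J"
      using circE[OF x(1)] by blast
    have "nG z \<noteq> 0"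
    proof
      assume "nG z = 0"
      hence "stem_N mul cj G z = (0, 0)" using TG1 z(1) by (simp add: NGe sc_E)
      thus False using x(2) SL[OF stem_N_stem[OF stemG] z(1,2)] z(3) by simp
    qed
    with z show ?thesis by blast
  qed
  have cnF: "continuous_on D nF" using holomorphic_on_imp_continuous_on[OF holF] .
  have cnG: "continuous_on D nG" using holomorphic_on_imp_continuous_on[OF holG] .
  have cscE: "continuous_on D (\<lambda>z. sc (nF z * nG z) E)"
    unfolding sc_E by (intro continuous_intros cnF cnG)
  have ext: "K w = 0" if K: "continuous_on D K" and w: "w \<in> D"
      and KT: "\<forall>z\<in>D. nF z \<noteq> 0 \<longrightarrow> nG z \<noteq> 0 \<longrightarrow> K z = 0"
    for K :: "complex \<Rightarrow> 'a \<times> 'a" and w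
  proof -
    obtain zf zg where zf: "zf \<in> D" "nF zf \<noteq> 0" and zg: "zg \<in> D" "nG zg \<noteq> 0" using nzF nzG by blast
    obtain S where S: "open S" "connected S" "S \<subseteq> D" "w \<in> S" and sf: "\<exists>z\<in>S. nF z \<noteq> 0" and sg: "\<exists>z\<in>S. nG z \<noteq> 0"
      using nbhd[OF dom w zf zg symF symG] by blast
    obtain z1 where z1: "z1 \<in> S" "nF z1 \<noteq> 0" using sf by blast
    obtain z2 where z2: "z2 \<in> S" "nG z2 \<noteq> 0" using sg by blast
    have "w \<in> closure {z\<in>S. nF z * nG z \<noteq> 0}"
      by (rule both_nz[OF holomorphic_on_subset[OF holF S(3)] holomorphic_on_subset[OF holG S(3)] S(1,2) z1 z2 S(4)])
    moreover have "\<forall>z\<in>{z\<in>S. nF z * nG z \<noteq> 0}. K z = 0" using KT S(3) by auto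
    ultimately show "K w = 0" using zero_ext[OF continuous_on_subset[OF K S(3)] S(1) S(4)] by blast
  qed
  have key1: "\<forall>z\<in>D. cm (cm (F z) (G z)) (cm (cinv cj (G z)) (cinv cj (F z))) = sc (nF z * nG z) E"
  proof
    fix w assume w: "w \<in> D"
    have "(\<lambda>z. cm (cm (F z) (G z)) (cm (cinv cj (G z)) (cinv cj (F z))) - sc (nF z * nG z) E) w = 0"
    proof (rule ext[OF _ w])
      show "continuous_on D (\<lambda>z. cm (cm (F z) (G z)) (cm (cinv cj (G z)) (cinv cj (F z))) - sc (nF z * nG z) E)"
        by (intro continuous_on_diff cscE cont_cm cont_cinv contF contG)
      show "\<forall>z\<in>D. nF z \<noteq> 0 \<longrightarrow> nG z \<noteq> 0 \<longrightarrow>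
          (\<lambda>z. cm (cm (F z) (G z)) (cm (cinv cj (G z)) (cinv cj (F z))) - sc (nF z * nG z) E) z = 0"
        using KP TF1 TF2 TG1 TG2 by simp
    qed
    thus "cm (cm (F w) (G w)) (cm (cinv cj (G w)) (cinv cj (F w))) = sc (nF w * nG w) E" by simp
  qed
  have key2: "\<forall>z\<in>D. cm (cm (cinv cj (G z)) (cinv cj (F z))) (cm (F z) (G z)) = sc (nF z * nG z) E"
  proof
    fix w assume w: "w \<in> D"
    have "(\<lambda>z. cm (cm (cinv cj (G z)) (cinv cj (F z))) (cm (F z) (G z)) - sc (nF z * nG z) E) w = 0"
    proof (rule ext[OF _ w])
      show "continuous_on D (\<lambda>z. cm (cm (cinv cj (G z)) (cinv cj (F z))) (cm (F z) (G z)) - sc (nF z * nG z) E)"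
        by (intro continuous_on_diff cscE cont_cm cont_cinv contF contG)
      show "\<forall>z\<in>D. nF z \<noteq> 0 \<longrightarrow> nG z \<noteq> 0 \<longrightarrow>
          (\<lambda>z. cm (cm (cinv cj (G z)) (cinv cj (F z))) (cm (F z) (G z)) - sc (nF z * nG z) E) z = 0"
      proof (intro ballI impI)
        fix z assume z: "z \<in> D" "nF z \<noteq> 0" "nG z \<noteq> 0"
        have "cm (cm (cinv cj (G z)) (cinv cj (F z))) (cm (cinv cj (cinv cj (F z))) (cinv cj (cinv cj (G z))))
          = sc (nG z * nF z) E"
          by (rule KP) (use TF1 TF2 TG1 TG2 z in auto)
        thus "(\<lambda>z. cm (cm (cinv cj (G z)) (cinv cj (F z))) (cm (F z) (G z)) - sc (nF z * nG z) E) z = 0"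
          by (simp add: mult.commute)
      qed
    qed
    thus "cm (cm (cinv cj (G w)) (cinv cj (F w))) (cm (F w) (G w)) = sc (nF w * nG w) E" by simp
  qed
  have NFGe: "stem_N mul cj (stem_prod mul F G) z = cm (cm (F z) (G z)) (cm (cinv cj (G z)) (cinv cj (F z)))" for z
    by (simp add: stem_N_def stem_prod_def stem_cj_def cinv_cm)
  have NFGce: "stem_N mul cj (stem_cj cj (stem_prod mul F G)) z = cm (cm (cinv cj (G z)) (cinv cj (F z))) (cm (F z) (G z))" for z
    by (simp add: stem_N_def stem_prod_def stem_cj_def cinv_cm)
  have stFG: "stem_on D (stem_prod mul F G)" by (rule stem_prod_stem[OF stemF stemG])
  have C1: "\<forall>x\<in>circ mul one cj D.
            slice_of mul one cj (stem_N mul cj (stem_prod mul F G)) x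
              = mul (slice_of mul one cj (stem_N mul cj F) x) (slice_of mul one cj (stem_N mul cj G) x)
          \<and> mul (slice_of mul one cj (stem_N mul cj F) x) (slice_of mul one cj (stem_N mul cj G) x)
              = mul (slice_of mul one cj (stem_N mul cj G) x) (slice_of mul one cj (stem_N mul cj F) x)"
  proof
    fix x assume x: "x \<in> circ mul one cj D"
    obtain z J where z: "z \<in> D" and J: "J \<in> sph mul one cj" and xe: "x = Re z *\<^sub>R one + Im z *\<^sub>R J"
      using circE[OF x] by blast
    have sFG: "slice_of mul one cj (stem_N mul cj (stem_prod mul F G)) x
       = Re (nF z * nG z) *\<^sub>R one + mul J (Im (nF z * nG z) *\<^sub>R one)"
      using SL[OF stem_N_stem[OF stFG] z J] key1 z unfolding xe NFGe by (simp add: sc_E)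
    have sF: "slice_of mul one cj (stem_N mul cj F) x = Re (nF z) *\<^sub>R one + mul J (Im (nF z) *\<^sub>R one)"
      using SL[OF stem_N_stem[OF stemF] z J] TF1 z unfolding xe NFe by (simp add: sc_E)
    have sG: "slice_of mul one cj (stem_N mul cj G) x = Re (nG z) *\<^sub>R one + mul J (Im (nG z) *\<^sub>R one)"
      using SL[OF stem_N_stem[OF stemG] z J] TG1 z unfolding xe NGe by (simp add: sc_E)
    show "slice_of mul one cj (stem_N mul cj (stem_prod mul F G)) x
              = mul (slice_of mul one cj (stem_N mul cj F) x) (slice_of mul one cj (stem_N mul cj G) x)
          \<and> mul (slice_of mul one cj (stem_N mul cj F) x) (slice_of mul one cj (stem_N mul cj G) x)
              = mul (slice_of mul one cj (stem_N mul cj G) x) (slice_of mul one cj (stem_N mul cj F) x)"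
      unfolding sFG sF sG cplx_mul[OF J] by (simp add: algebra_simps)
  qed
  have C2: "slice_regular_on D (stem_prod mul F G)"
    unfolding slice_regular_on_def
  proof (intro conjI oD exI[of _ "\<lambda>z h. cm (F z) (G' z h) + cm (F' z h) (G z)"] ballI)
    fix z assume z: "z \<in> D"
    show "(stem_prod mul F G has_derivative (\<lambda>h. cm (F z) (G' z h) + cm (F' z h) (G z))) (at z)"
      unfolding stem_prod_def by (rule dprod[OF dF[rule_format, OF z] dG[rule_format, OF z]])
    have cr: "cm (F z) (G' z \<i>) + cm (F' z \<i>) (G z) = sc \<i> (cm (F z) (G' z 1) + cm (F' z 1) (G z))"
      by (rule prod_cr) (use crF crG z in auto)
    show "fst (cm (F z) (G' z 1) + cm (F' z 1) (G z)) - snd (cm (F z) (G' z \<i>) + cm (F' z \<i>) (G z)) = 0"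
      "snd (cm (F z) (G' z 1) + cm (F' z 1) (G z)) + fst (cm (F z) (G' z \<i>) + cm (F' z \<i>) (G z)) = 0"
      unfolding cr sc_i by simp_all
  next
    show "continuous_on D (\<lambda>z. cm (F z) (G' z 1) + cm (F' z 1) (G z))"
      by (intro continuous_on_add cont_cm contF contG cF1 cG1)
    show "continuous_on D (\<lambda>z. cm (F z) (G' z \<i>) + cm (F' z \<i>) (G z))"
      by (intro continuous_on_add cont_cm contF contG cFi cGi)
  qed
  have C3: "tame_on mul one cj D (stem_prod mul F G)"
    unfolding tame_on_def
  proof
    show "slice_preserving_on one D (stem_N mul cj (stem_prod mul F G))"
      unfolding slice_preserving_on_def using key1 by (auto simp: NFGe sc_E)
    show "\<forall>x\<in>circ mul one cj D. slice_of mul one cj (stem_N mul cj (stem_prod mul F G)) x =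
        slice_of mul one cj (stem_N mul cj (stem_cj cj (stem_prod mul F G))) x"
      by (rule stem_slice_eq[OF stem_N_stem[OF stFG] stem_N_stem[OF stem_cj_stem[OF stFG]]])
        (use key1 key2 in \<open>simp add: NFGe NFGce\<close>)
  qed
  show ?thesis using C1 C2 C3 by blast
qed

end

theorem proposition2p6:
  fixes mul :: "'a::euclidean_space \<Rightarrow> 'a \<Rightarrow> 'a" and one :: 'a and cj :: "'a \<Rightarrow> 'a"
    and D :: "complex set" and F G :: "complex \<Rightarrow> 'a \<times> 'a"
  assumes alg: "alt_star_algebra mul one cj"
    and sph_ne: "sph mul one cj \<noteq> {}"
    and D_ne: "D \<noteq> {}" and D_cnj: "cnj ` D = D"
    and dom: "slice_domain D \<or> product_domain D"
    and stemF: "stem_on D F" and stemG: "stem_on D G"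
    and regF: "slice_regular_on D F" and regG: "slice_regular_on D G"
    and tameF: "tame_on mul one cj D F" and tameG: "tame_on mul one cj D G"
    and NF: "\<exists>x\<in>circ mul one cj D. slice_of mul one cj (stem_N mul cj F) x \<noteq> 0"
    and NG: "\<exists>x\<in>circ mul one cj D. slice_of mul one cj (stem_N mul cj G) x \<noteq> 0"
  shows "(\<forall>x\<in>circ mul one cj D.
            slice_of mul one cj (stem_N mul cj (stem_prod mul F G)) x
              = mul (slice_of mul one cj (stem_N mul cj F) x) (slice_of mul one cj (stem_N mul cj G) x)
          \<and> mul (slice_of mul one cj (stem_N mul cj F) x) (slice_of mul one cj (stem_N mul cj G) x)
              = mul (slice_of mul one cj (stem_N mul cj G) x) (slice_of mul one cj (stem_N mul cj F) x))
         \<and> slice_regular_on D (stem_prod mul F G)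
         \<and> tame_on mul one cj D (stem_prod mul F G)"
proof -
  interpret star mul one cj by unfold_locales (rule alg)
  show ?thesis by (rule main[OF sph_ne dom stemF stemG regF regG tameF tameG NF NG])
qed

end
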